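(* Let $d \ge 2$ and $n \ge 1$ be integers and $\sigma > 0$. Let $W \in \mathbb{R}^{d \times n}$ have independent entries $w_{ki} \sim N(0,\sigma^2)$. Define the $n \times n$ diagonal matrix $T = \operatorname{diag}\bigl(\sum_{j=1}^{n} |(W^T W)_{ij}|\bigr)_{i=1}^n$ and $\bar W = W T^{-1/2}$. Then for every column index $i$ and row index $k$, the random variable $\frac{w_{ki}^2}{\sum_{m=1}^{d} w_{mi}^2}$ follows the Beta distribution $\mathrm{B}\bigl(\tfrac12, \tfrac{d-1}{2}\bigr)$, its expectation equals $\frac{1}{d}$, and consequently $\mathbb{E}\bigl[\bar W_{ki}^2\bigr] \le \frac{1}{d}$; in particular this bound does not depend on $\sigma$.
   Context: $|(W^TW)_{ij}|$ denotes the absolute value of the $(i,j)$ entry of $W^TW$. The matrix $W T^{-1/2}$ is the weight parametrization used in Almost-Orthogonal Layers / SDP-based Lipschitz Layers (with all scaling parameters $q_i = 1$). $\mathrm{B}(a,b)$ denotes the Beta distribution with parameters $a,b>0$. *)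

theory Defs
  imports "HOL-Probability.Probability"
begin

definition beta_density :: "real \<Rightarrow> real \<Rightarrow> real \<Rightarrow> real" where
  "beta_density a b x =
     (if 0 < x \<and> x < 1 then x powr (a - 1) * (1 - x) powr (b - 1) / Beta a b else 0)"

end

theory Submission
  imports Defs
begin

definition gd :: "real \<Rightarrow> real \<Rightarrow> real \<Rightarrow> real" where
  "gd a c x = (if 0 < x then c powr a * x powr (a - 1) * exp (- (c * x)) / Gamma a else 0)"

lemma gd_nonneg: "c > 0 \<Longrightarrow> a > 0 \<Longrightarrow> 0 \<le> gd a c x"
  by (auto simp: gd_def)

lemma gd_meas[measurable]: "gd a c \<in> borel_measurable borel"
  unfolding gd_def by measurable

lemma GI:
  fixes a l :: real
  assumes a: "a > 0" and l: "l > 0"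
  shows "(\<integral>\<^sup>+x. ennreal (x powr (a - 1) * exp (- (l * x))) * indicator {0..} x \<partial>lborel)
          = ennreal (Gamma a / l powr a)"
proof -
  have "(\<integral>\<^sup>+x. ennreal (x powr (a - 1) * exp (- (l * x))) * indicator {0..} x \<partial>lborel)
     = ennreal \<bar>1/l\<bar> * (\<integral>\<^sup>+x. ennreal ((0 + 1/l * x) powr (a - 1) * exp (- (l * (0 + 1/l * x)))) * indicator {0..} (0 + 1/l * x) \<partial>lborel)"
    by (rule nn_integral_real_affine) (use l in auto)
  also have "\<dots> = ennreal (1/l) * (\<integral>\<^sup>+x. ennreal (l powr (1 - a) * (x powr (a - 1) / exp x)) * indicator {0..} x \<partial>lborel)"
  proof -
    have "ennreal ((0 + 1/l * x) powr (a - 1) * exp (- (l * (0 + 1/l * x)))) * indicator {0..} (0 + 1/l * x)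
       = ennreal (l powr (1 - a) * (x powr (a - 1) / exp x)) * indicator {0..} x" for x
    proof (cases "x \<ge> 0")
      case True
      have "(x / l) powr (a - 1) = x powr (a - 1) * l powr (1 - a)"
        using True l by (simp add: powr_divide powr_minus_divide divide_simps powr_diff)
      then show ?thesis using True l by (simp add: exp_minus field_simps)
    next
      case False
      then show ?thesis using l by (auto simp: indicator_def zero_le_divide_iff)
    qed
    then show ?thesis using l by simp
  qed
  also have "\<dots> = ennreal (1/l) * (ennreal (l powr (1 - a)) * (\<integral>\<^sup>+x. ennreal (x powr (a - 1) / exp x) * indicator {0..} x \<partial>lborel))"
  proof -
    have "(\<integral>\<^sup>+x. ennreal (l powr (1 - a) * (x powr (a - 1) / exp x)) * indicator {0..} x \<partial>lborel)
      = (\<integral>\<^sup>+x. ennreal (l powr (1 - a)) * (ennreal (x powr (a - 1) / exp x) * indicator {0..} x) \<partial>lborel)"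
      by (intro nn_integral_cong) (simp only: ennreal_mult'[OF powr_ge_zero] mult.assoc)
    also have "\<dots> = ennreal (l powr (1 - a)) * (\<integral>\<^sup>+x. ennreal (x powr (a - 1) / exp x) * indicator {0..} x \<partial>lborel)"
      by (rule nn_integral_cmult) auto
    finally show ?thesis by simp
  qed
  also have "(\<integral>\<^sup>+x. ennreal (x powr (a - 1) / exp x) * indicator {0..} x \<partial>lborel) = ennreal (Gamma a)"
    by (rule nn_integral_has_integral_lebesgue'[OF _ Gamma_integral_real[OF a]]) auto
  also have "ennreal (1/l) * (ennreal (l powr (1 - a)) * ennreal (Gamma a)) = ennreal (Gamma a / l powr a)"
    using l a by (simp add: ennreal_mult''[symmetric] powr_diff field_simps)
  finally show ?thesis .
qed

lemma SUB:
  fixes f :: "real \<Rightarrow> ennreal" and g g' :: "real \<Rightarrow> real" and a :: real and bs :: "nat \<Rightarrow> real"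
  assumes f[measurable]: "f \<in> borel_measurable borel"
    and gm[measurable]: "g \<in> borel_measurable borel" and g'm[measurable]: "g' \<in> borel_measurable borel"
    and deriv: "\<And>x n. x \<in> {a..bs n} \<Longrightarrow> (g has_real_derivative g' x) (at x)"
    and cont: "\<And>n. continuous_on {a..bs n} g'"
    and nn: "\<And>x n. x \<in> {a..bs n} \<Longrightarrow> g' x \<ge> 0"
    and abs: "\<And>n. a < bs n" and inc1: "incseq bs" and inc2: "incseq (\<lambda>n. g (bs n))"
  shows "(\<integral>\<^sup>+y. f y * indicator (\<Union>n. {g a..g (bs n)}) y \<partial>lborel)
       = (\<integral>\<^sup>+x. f (g x) * ennreal (g' x) * indicator (\<Union>n. {a..bs n}) x \<partial>lborel)"
proof -
  have i1: "incseq (\<lambda>n. {g a..g (bs n)})" using inc2 by (auto simp: incseq_def)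
  have i2: "incseq (\<lambda>n. {a..bs n})" using inc1 by (auto simp: incseq_def)
  have "(\<integral>\<^sup>+y. f y * indicator (\<Union>n. {g a..g (bs n)}) y \<partial>lborel)
      = emeasure (density lborel f) (\<Union>n. {g a..g (bs n)})"
    by (subst emeasure_density) auto
  also have "\<dots> = (SUP n. emeasure (density lborel f) {g a..g (bs n)})"
    by (rule SUP_emeasure_incseq[symmetric]) (use i1 in auto)
  also have "\<dots> = (SUP n. (\<integral>\<^sup>+x. f (g x) * ennreal (g' x) * indicator {a..bs n} x \<partial>lborel))"
  proof (intro SUP_cong refl)
    fix n
    have "emeasure (density lborel f) {g a..g (bs n)} = (\<integral>\<^sup>+y. f y * indicator {g a..g (bs n)} y \<partial>lborel)"
      by (subst emeasure_density) auto
    also have "\<dots> = (\<integral>\<^sup>+x. f (g x) * ennreal (g' x) * indicator {a..bs n} x \<partial>lborel)"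
      by (rule nn_integral_substitution_aux[OF f _ deriv cont nn abs]) auto
    finally show "emeasure (density lborel f) {g a..g (bs n)} = (\<integral>\<^sup>+x. f (g x) * ennreal (g' x) * indicator {a..bs n} x \<partial>lborel)" .
  qed
  also have "\<dots> = (SUP n. emeasure (density lborel (\<lambda>x. f (g x) * ennreal (g' x))) {a..bs n})"
    by (intro SUP_cong refl) (subst emeasure_density, auto)
  also have "\<dots> = emeasure (density lborel (\<lambda>x. f (g x) * ennreal (g' x))) (\<Union>n. {a..bs n})"
    by (rule SUP_emeasure_incseq) (use i2 in auto)
  also have "\<dots> = (\<integral>\<^sup>+x. f (g x) * ennreal (g' x) * indicator (\<Union>n. {a..bs n}) x \<partial>lborel)"
    by (subst emeasure_density) auto
  finally show ?thesis .
qed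


lemma gd_half_sq:
  fixes \<sigma> x :: real
  assumes s: "\<sigma> > 0" and x: "x > 0"
  shows "gd (1/2) (1/(2*\<sigma>\<^sup>2)) (x\<^sup>2) * (2 * x) = 2 * normal_density 0 \<sigma> x"
proof -
  have p1: "(x\<^sup>2) powr (1/2 - 1) = 1 / x"
  proof -
    have "(x\<^sup>2) powr (1/2 - 1) = (x\<^sup>2) powr (- (1/2))" by simp
    also have "\<dots> = 1 / (x\<^sup>2) powr (1/2)" by (rule powr_minus_divide)
    also have "(x\<^sup>2) powr (1/2) = x" using x by (simp add: powr_half_sqrt)
    finally show ?thesis .
  qed
  have p2: "(1/(2*\<sigma>\<^sup>2)) powr (1/2) = 1 / (sqrt 2 * \<sigma>)"
    using s by (simp add: powr_half_sqrt real_sqrt_divide real_sqrt_mult)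
  have p3: "sqrt (2 * pi * \<sigma>\<^sup>2) = sqrt 2 * sqrt pi * \<sigma>"
    using s by (simp add: real_sqrt_mult)
  have p1': "(x\<^sup>2) powr (- (1/2)) = 1 / x" using p1 by simp
  have p3': "sqrt (pi * (2 * \<sigma>\<^sup>2)) = sqrt 2 * sqrt pi * \<sigma>"
    using p3 by (simp add: ac_simps)
  show ?thesis
    using x s unfolding gd_def normal_density_def
    by (simp add: p1 p1' p2 p3 p3' Gamma_one_half_real field_simps)
qed


lemma normal_sym: "normal_density 0 \<sigma> (- x) = normal_density 0 \<sigma> x"
  by (simp add: normal_density_def)

lemma L1:
  fixes X :: "'a \<Rightarrow> real" and \<sigma> :: real
  assumes P: "prob_space M" and s: "\<sigma> > 0"
    and X: "distributed M lborel X (\<lambda>x. ennreal (normal_density 0 \<sigma> x))"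
  shows "distributed M lborel (\<lambda>\<omega>. (X \<omega>)\<^sup>2) (\<lambda>x. ennreal (gd (1/2) (1/(2*\<sigma>\<^sup>2)) x))"
proof -
  define c where "c = 1/(2*\<sigma>\<^sup>2)"
  have c: "c > 0" using s by (simp add: c_def)
  have Xm[measurable]: "X \<in> borel_measurable M"
    using distributed_measurable[OF X] by simp
  have key: "(\<integral>\<^sup>+x. ennreal (normal_density 0 \<sigma> x) * indicator A (x\<^sup>2) \<partial>lborel)
      = (\<integral>\<^sup>+y. ennreal (gd (1/2) c y) * indicator A y \<partial>lborel)" if A[measurable]: "A \<in> sets borel" for A
  proof -
    define F where "F x = ennreal (normal_density 0 \<sigma> x) * indicator A (x\<^sup>2)" for x
    have Fm[measurable]: "F \<in> borel_measurable borel" unfolding F_def by measurable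
    have "(\<integral>\<^sup>+x. F x \<partial>lborel) = (\<integral>\<^sup>+x. F x * indicator {0..} x + F x * indicator {..<0} x \<partial>lborel)"
      by (intro nn_integral_cong) (auto simp: indicator_def)
    also have "\<dots> = (\<integral>\<^sup>+x. F x * indicator {0..} x \<partial>lborel) + (\<integral>\<^sup>+x. F x * indicator {..<0} x \<partial>lborel)"
      by (rule nn_integral_add) auto
    also have "(\<integral>\<^sup>+x. F x * indicator {..<0} x \<partial>lborel) = (\<integral>\<^sup>+x. F x * indicator {0..} x \<partial>lborel)"
    proof -
      have "(\<integral>\<^sup>+x. F x * indicator {..<0} x \<partial>lborel)
          = ennreal \<bar>-1\<bar> * (\<integral>\<^sup>+x. F (0 + -1 * x) * indicator {..<0} (0 + -1 * x) \<partial>lborel)"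
        by (rule nn_integral_real_affine) auto
      also have "\<dots> = (\<integral>\<^sup>+x. F x * indicator {0<..} x \<partial>lborel)"
        by (auto simp: F_def normal_sym indicator_def intro!: nn_integral_cong)
      also have "\<dots> = (\<integral>\<^sup>+x. F x * indicator {0..} x \<partial>lborel)"
        by (intro nn_integral_cong_AE) (use AE_lborel_singleton[of 0] in \<open>auto elim!: eventually_mono simp: indicator_def\<close>)
      finally show ?thesis .
    qed
    finally have eq1: "(\<integral>\<^sup>+x. F x \<partial>lborel) = 2 * (\<integral>\<^sup>+x. F x * indicator {0..} x \<partial>lborel)"
      by (simp add: mult_2)
    define G where "G y = ennreal (gd (1/2) c y) * indicator A y" for y
    have Gm[measurable]: "G \<in> borel_measurable borel" unfolding G_def by measurable
    have U1: "(\<Union>n::nat. {(0::real)\<^sup>2..(real n + 1)\<^sup>2}) = {0..}"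
    proof safe
      fix y :: real assume "0 \<le> y"
      obtain n :: nat where n: "y \<le> real n + 1"
        using \<open>0 \<le> y\<close> by (intro that[of "nat \<lceil>y\<rceil>"]) linarith
      have "y \<le> (real n + 1)\<^sup>2" using n by (simp add: power2_eq_square) (smt (verit) mult_le_cancel_right1 of_nat_0_le_iff)
      then show "y \<in> (\<Union>n::nat. {(0::real)\<^sup>2..(real n + 1)\<^sup>2})" using \<open>0 \<le> y\<close> by auto
    qed auto
    have U2: "(\<Union>n::nat. {(0::real)..real n + 1}) = {0..}"
    proof safe
      fix y :: real assume "0 \<le> y"
      obtain n :: nat where n: "y \<le> real n + 1"
        using \<open>0 \<le> y\<close> by (intro that[of "nat \<lceil>y\<rceil>"]) linarith
      then show "y \<in> (\<Union>n::nat. {(0::real)..real n + 1})" using \<open>0 \<le> y\<close> by auto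
    qed auto
    have "(\<integral>\<^sup>+y. G y \<partial>lborel) = (\<integral>\<^sup>+y. G y * indicator (\<Union>n::nat. {(0::real)\<^sup>2..(real n + 1)\<^sup>2}) y \<partial>lborel)"
      unfolding U1 by (intro nn_integral_cong) (auto simp: G_def gd_def indicator_def)
    also have "\<dots> = (\<integral>\<^sup>+x. G (x\<^sup>2) * ennreal (2 * x) * indicator (\<Union>n::nat. {0..real n + 1}) x \<partial>lborel)"
      by (rule SUB[of G "\<lambda>x. x\<^sup>2" "\<lambda>x. 2 * x" 0 "\<lambda>n. real n + 1"])
         (auto intro!: derivative_eq_intros continuous_intros simp: incseq_def power_mono)
    also have "\<dots> = (\<integral>\<^sup>+x. 2 * (F x * indicator {0..} x) \<partial>lborel)"
    proof (intro nn_integral_cong_AE)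
      show "AE x in lborel. G (x\<^sup>2) * ennreal (2 * x) * indicator (\<Union>n::nat. {0..real n + 1}) x = 2 * (F x * indicator {0..} x)"
        using AE_lborel_singleton[of 0]
      proof (rule eventually_mono)
        fix x :: real assume "x \<noteq> 0"
        show "G (x\<^sup>2) * ennreal (2 * x) * indicator (\<Union>n::nat. {0..real n + 1}) x = 2 * (F x * indicator {0..} x)"
        proof (cases "x > 0")
          case True
          have "G (x\<^sup>2) * ennreal (2 * x) = ennreal (gd (1/2) c (x\<^sup>2) * (2 * x)) * indicator A (x\<^sup>2)"
            using True c by (simp add: G_def ennreal_mult'' gd_nonneg mult_ac)
          also have "gd (1/2) c (x\<^sup>2) * (2 * x) = 2 * normal_density 0 \<sigma> x"
            unfolding c_def by (rule gd_half_sq[OF s True])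
          finally show ?thesis using True unfolding U2
            by (simp add: F_def ennreal_mult'' indicator_def mult_ac)
        next
          case False
          then show ?thesis using \<open>x \<noteq> 0\<close> unfolding U2 by (simp add: indicator_def)
        qed
      qed
    qed
    also have "\<dots> = 2 * (\<integral>\<^sup>+x. F x * indicator {0..} x \<partial>lborel)"
      by (rule nn_integral_cmult) auto
    finally show ?thesis using eq1 unfolding F_def G_def by simp
  qed
  show ?thesis
    unfolding distributed_def
  proof (intro conjI)
    show "(\<lambda>\<omega>. (X \<omega>)\<^sup>2) \<in> measurable M lborel" by simp
    show "(\<lambda>x. ennreal (gd (1/2) (1/(2*\<sigma>\<^sup>2)) x)) \<in> borel_measurable lborel" by simp
    show "distr M lborel (\<lambda>\<omega>. (X \<omega>)\<^sup>2) = density lborel (\<lambda>x. ennreal (gd (1/2) (1/(2*\<sigma>\<^sup>2)) x))"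
    proof (rule measure_eqI[symmetric])
      fix A assume "A \<in> sets (density lborel (\<lambda>x. ennreal (gd (1/2) (1/(2*\<sigma>\<^sup>2)) x)))"
      then have A[measurable]: "A \<in> sets borel" by simp
      have "emeasure (distr M lborel (\<lambda>\<omega>. (X \<omega>)\<^sup>2)) A = emeasure M (X -` {x. x\<^sup>2 \<in> A} \<inter> space M)"
        by (subst emeasure_distr) (auto intro!: arg_cong[where f="emeasure M"])
      also have "\<dots> = (\<integral>\<^sup>+x. ennreal (normal_density 0 \<sigma> x) * indicator {x. x\<^sup>2 \<in> A} x \<partial>lborel)"
        by (rule distributed_emeasure[OF X]) simp
      also have "\<dots> = (\<integral>\<^sup>+x. ennreal (normal_density 0 \<sigma> x) * indicator A (x\<^sup>2) \<partial>lborel)"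
        by (intro nn_integral_cong) (simp add: indicator_def)
      also have "\<dots> = emeasure (density lborel (\<lambda>x. ennreal (gd (1/2) (1/(2*\<sigma>\<^sup>2)) x))) A"
        using key[OF A] by (subst emeasure_density) (auto simp: c_def)
      finally show "emeasure (density lborel (\<lambda>x. ennreal (gd (1/2) (1/(2*\<sigma>\<^sup>2)) x))) A = emeasure (distr M lborel (\<lambda>\<omega>. (X \<omega>)\<^sup>2)) A" by simp
    qed simp
  qed
qed


lemma conv_gd:
  fixes a b c z :: real
  assumes a: "a > 0" and b: "b > 0" and c: "c > 0"
  shows "(\<integral>\<^sup>+y. ennreal (gd a c (z - y)) * ennreal (gd b c y) \<partial>lborel) = ennreal (gd (a + b) c z)"
proof (cases "z > 0")
  case False
  have e0: "ennreal (gd a c (z - y)) * ennreal (gd b c y) = 0" for y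
    using False by (auto simp: gd_def)
  have "(\<integral>\<^sup>+y. ennreal (gd a c (z - y)) * ennreal (gd b c y) \<partial>lborel) = (\<integral>\<^sup>+y. 0 \<partial>lborel)"
    by (simp add: e0)
  then show ?thesis using False by (simp add: gd_def)
next
  case z: True
  define K where "K = c powr (a + b) * exp (- (c * z)) / (Gamma a * Gamma b)"
  have K: "K \<ge> 0" using a b c by (simp add: K_def)
  have e1: "ennreal (gd a c (z - y)) * ennreal (gd b c y)
      = ennreal K * (ennreal ((z - y) powr (a - 1) * y powr (b - 1)) * indicator {0..z} y)" for y
  proof -
    consider "0 < y \<and> y < z" | "y = 0" | "y = z" | "y < 0 \<or> y > z" by linarith
    then show ?thesis
    proof cases
      case 1
      have "gd a c (z - y) * gd b c y = K * ((z - y) powr (a - 1) * y powr (b - 1))"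
        using 1 unfolding gd_def K_def
        by (simp add: powr_add exp_add[symmetric] field_simps)
      then show ?thesis using 1 a b c K
        by (simp add: ennreal_mult''[symmetric] gd_nonneg indicator_def)
    qed (auto simp: gd_def indicator_def)
  qed
  have "(\<integral>\<^sup>+y. ennreal (gd a c (z - y)) * ennreal (gd b c y) \<partial>lborel)
      = ennreal K * (\<integral>\<^sup>+y. ennreal ((z - y) powr (a - 1) * y powr (b - 1)) * indicator {0..z} y \<partial>lborel)"
    unfolding e1 by (rule nn_integral_cmult) auto
  also have "(\<integral>\<^sup>+y. ennreal ((z - y) powr (a - 1) * y powr (b - 1)) * indicator {0..z} y \<partial>lborel)
      = ennreal \<bar>z\<bar> * (\<integral>\<^sup>+t. ennreal ((z - (0 + z * t)) powr (a - 1) * (0 + z * t) powr (b - 1)) * indicator {0..z} (0 + z * t) \<partial>lborel)"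
    by (rule nn_integral_real_affine) (use z in auto)
  also have "(\<integral>\<^sup>+t. ennreal ((z - (0 + z * t)) powr (a - 1) * (0 + z * t) powr (b - 1)) * indicator {0..z} (0 + z * t) \<partial>lborel)
      = (\<integral>\<^sup>+t. ennreal (z powr (a + b - 2)) * (ennreal (t powr (b - 1) * (1 - t) powr (a - 1)) * indicator {0..1} t) \<partial>lborel)"
  proof (intro nn_integral_cong)
    fix t :: real
    show "ennreal ((z - (0 + z * t)) powr (a - 1) * (0 + z * t) powr (b - 1)) * indicator {0..z} (0 + z * t)
      = ennreal (z powr (a + b - 2)) * (ennreal (t powr (b - 1) * (1 - t) powr (a - 1)) * indicator {0..1} t)"
    proof (cases "0 \<le> t \<and> t \<le> 1")
      case True
      have "(z - z * t) = z * (1 - t)" by (simp add: algebra_simps)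
      then have p1: "(z - (0 + z * t)) powr (a - 1) = z powr (a - 1) * (1 - t) powr (a - 1)"
        using True z by (simp add: powr_mult)
      have p2: "(0 + z * t) powr (b - 1) = z powr (b - 1) * t powr (b - 1)"
        using True z by (simp add: powr_mult)
      have p3: "z powr (a + b - 2) = z powr (a - 1) * z powr (b - 1)"
        by (simp add: powr_add[symmetric])
      have "(z - (0 + z * t)) powr (a - 1) * (0 + z * t) powr (b - 1)
          = z powr (a + b - 2) * (t powr (b - 1) * (1 - t) powr (a - 1))"
        unfolding p1 p2 p3 by (simp add: mult_ac)
      moreover have "0 + z * t \<in> {0..z}" using True z by (auto simp: mult_le_cancel_left1)
      ultimately show ?thesis using True z by (simp add: ennreal_mult''[symmetric])
    next
      case False
      then have "0 + z * t \<notin> {0..z}" using z by (auto simp: zero_le_mult_iff mult_le_cancel_left1)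
      then show ?thesis using False by simp
    qed
  qed
  also have "\<dots> = ennreal (z powr (a + b - 2)) * ennreal (Beta b a)"
    by (subst nn_integral_cmult) (auto simp: nn_integral_has_integral_lebesgue'[OF _ has_integral_Beta_real[OF b a]])
  finally have "(\<integral>\<^sup>+y. ennreal (gd a c (z - y)) * ennreal (gd b c y) \<partial>lborel)
      = ennreal (K * (z * (z powr (a + b - 2) * Beta b a)))"
    using z K a b by (simp add: ennreal_mult''[symmetric] Beta_def)
  also have "K * (z * (z powr (a + b - 2) * Beta b a)) = gd (a + b) c z"
  proof -
    have "z powr (a + b - 1) = z powr (1 + (a + b - 2))" by simp
    also have "\<dots> = z powr 1 * z powr (a + b - 2)" by (rule powr_add)
    also have "z powr 1 = z" using z by simp
    finally have "z * z powr (a + b - 2) = z powr (a + b - 1)" by simp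
    moreover have "Gamma a \<noteq> 0" "Gamma b \<noteq> 0" "Gamma (a + b) \<noteq> 0" using a b
      by (metis Gamma_real_pos less_irrefl add_pos_pos)+
    ultimately show ?thesis using z a b unfolding K_def gd_def Beta_def
      by (simp add: field_simps)
  qed
  finally show ?thesis .
qed


lemma L2:
  fixes X Y :: "'a \<Rightarrow> real"
  assumes P: "prob_space M" and a: "a > 0" and b: "b > 0" and c: "c > 0"
    and ind: "prob_space.indep_var M borel X borel Y"
    and X: "distributed M lborel X (\<lambda>x. ennreal (gd a c x))"
    and Y: "distributed M lborel Y (\<lambda>x. ennreal (gd b c x))"
  shows "distributed M lborel (\<lambda>\<omega>. X \<omega> + Y \<omega>) (\<lambda>x. ennreal (gd (a + b) c x))"
proof -
  interpret prob_space M by fact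
  from distributed_convolution[OF ind X Y]
  have "distributed M lborel (\<lambda>x. X x + Y x) (\<lambda>x. \<integral>\<^sup>+y. ennreal (gd a c (x - y)) * ennreal (gd b c y) \<partial>lborel)" .
  then show ?thesis by (simp add: conv_gd a b c)
qed

lemma LS:
  fixes X :: "'i \<Rightarrow> 'a \<Rightarrow> real"
  assumes P: "prob_space M" and s: "\<sigma> > 0"
    and ind: "prob_space.indep_vars M (\<lambda>_. borel) X I"
    and N: "\<And>j. j \<in> I \<Longrightarrow> distributed M lborel (X j) (\<lambda>x. ennreal (normal_density 0 \<sigma> x))"
    and J: "finite J" "J \<noteq> {}" "J \<subseteq> I"
  shows "distributed M lborel (\<lambda>\<omega>. \<Sum>j\<in>J. (X j \<omega>)\<^sup>2) (\<lambda>x. ennreal (gd (real (card J) / 2) (1/(2*\<sigma>\<^sup>2)) x))"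
  using J
proof (induction J rule: finite_ne_induct)
  case (singleton j)
  then show ?case using L1[OF P s N[of j]] by simp
next
  case (insert j J)
  interpret prob_space M by fact
  have Xm[measurable]: "X l \<in> borel_measurable M" if "l \<in> I" for l
    using distributed_measurable[OF N[OF that]] by simp
  have jI: "j \<in> I" and JI: "J \<subseteq> I" using insert by auto
  have r: "indep_var (PiM {j} (\<lambda>_. borel)) (\<lambda>\<omega>. restrict (\<lambda>i. X i \<omega>) {j}) (PiM J (\<lambda>_. borel)) (\<lambda>\<omega>. restrict (\<lambda>i. X i \<omega>) J)"
    by (rule indep_var_restrict[OF ind]) (use insert jI in auto)
  have m1: "(\<lambda>f. (f j)\<^sup>2) \<in> borel_measurable (PiM {j} (\<lambda>_. borel :: real measure))"
    by (intro borel_measurable_power measurable_component_singleton) simp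
  have m2: "(\<lambda>f. \<Sum>l\<in>J. (f l)\<^sup>2) \<in> borel_measurable (PiM J (\<lambda>_. borel :: real measure))"
    by (intro borel_measurable_sum borel_measurable_power measurable_component_singleton) simp
  have "indep_var borel ((\<lambda>f. (f j)\<^sup>2) \<circ> (\<lambda>\<omega>. restrict (\<lambda>i. X i \<omega>) {j})) borel ((\<lambda>f. \<Sum>l\<in>J. (f l)\<^sup>2) \<circ> (\<lambda>\<omega>. restrict (\<lambda>i. X i \<omega>) J))"
    by (rule indep_var_compose[OF r m1 m2])
  also have "((\<lambda>f. (f j)\<^sup>2) \<circ> (\<lambda>\<omega>. restrict (\<lambda>i. X i \<omega>) {j})) = (\<lambda>\<omega>. (X j \<omega>)\<^sup>2)"
    by (auto simp: fun_eq_iff)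
  also have "((\<lambda>f. \<Sum>l\<in>J. (f l)\<^sup>2) \<circ> (\<lambda>\<omega>. restrict (\<lambda>i. X i \<omega>) J)) = (\<lambda>\<omega>. \<Sum>l\<in>J. (X l \<omega>)\<^sup>2)"
    by (auto simp: fun_eq_iff intro!: sum.cong)
  finally have iv: "indep_var borel (\<lambda>\<omega>. (X j \<omega>)\<^sup>2) borel (\<lambda>\<omega>. \<Sum>l\<in>J. (X l \<omega>)\<^sup>2)" .
  have "distributed M lborel (\<lambda>\<omega>. (X j \<omega>)\<^sup>2 + (\<Sum>l\<in>J. (X l \<omega>)\<^sup>2)) (\<lambda>x. ennreal (gd (1/2 + real (card J) / 2) (1/(2*\<sigma>\<^sup>2)) x))"
    by (rule L2[OF P _ _ _ iv L1[OF P s N[OF jI]] insert.IH]) (use s insert in \<open>auto simp: card_gt_0_iff\<close>)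
  moreover have "1/2 + real (card J) / 2 = real (card (insert j J)) / 2"
    using insert by (simp add: field_simps)
  ultimately show ?case using insert by simp
qed


definition bp :: "real \<Rightarrow> real \<Rightarrow> real \<Rightarrow> real" where
  "bp a b s = (if 0 < s then s powr (a - 1) * (1 + s) powr (- (a + b)) / Beta a b else 0)"

lemma bp_int:
  fixes a b c s :: real
  assumes a: "a > 0" and b: "b > 0" and c: "c > 0"
  shows "(\<integral>\<^sup>+v. ennreal (v * gd a c (v * s) * gd b c v) \<partial>lborel) = ennreal (bp a b s)"
proof (cases "s > 0")
  case False
  have e0: "ennreal (v * gd a c (v * s) * gd b c v) = 0" for v
    using False by (cases "v > 0") (auto simp: gd_def zero_less_mult_iff)
  have "(\<integral>\<^sup>+v. ennreal (v * gd a c (v * s) * gd b c v) \<partial>lborel) = (\<integral>\<^sup>+v. 0 \<partial>lborel)"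
    by (simp add: e0)
  then show ?thesis using False by (simp add: bp_def)
next
  case s: True
  have Ga: "Gamma a > 0" and Gb: "Gamma b > 0" and Gab: "Gamma (a + b) > 0" using a b by auto
  define K where "K = c powr (a + b) * s powr (a - 1) / (Gamma a * Gamma b)"
  have K: "K \<ge> 0" using Ga Gb c by (simp add: K_def)
  have e1: "ennreal (v * gd a c (v * s) * gd b c v)
      = ennreal K * (ennreal (v powr (a + b - 1) * exp (- ((c * (1 + s)) * v))) * indicator {0..} v)" for v
  proof -
    consider "v > 0" | "v = 0" | "v < 0" by linarith
    then show ?thesis
    proof cases
      case 1
      have pv: "v powr (a + b - 1) = v * (v powr (a - 1) * v powr (b - 1))"
      proof -
        have "v powr (a + b - 1) = v powr (1 + ((a - 1) + (b - 1)))" by simp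
        also have "\<dots> = v powr 1 * (v powr (a - 1) * v powr (b - 1))" by (simp only: powr_add)
        finally show ?thesis using \<open>v > 0\<close> by simp
      qed
      have ps: "(v * s) powr (a - 1) = v powr (a - 1) * s powr (a - 1)"
        using 1 s by (simp add: powr_mult)
      have ex: "exp (- (c * (v * s))) * exp (- (c * v)) = exp (- ((c * (1 + s)) * v))"
        by (simp add: exp_add[symmetric] algebra_simps)
      have "v * gd a c (v * s) * gd b c v = K * (v powr (a + b - 1) * exp (- ((c * (1 + s)) * v)))"
        using 1 s unfolding gd_def K_def pv ps ex[symmetric]
        by (simp add: powr_add field_simps)
      then show ?thesis using 1 K by (simp add: ennreal_mult''[symmetric])
    qed (auto simp: gd_def)
  qed
  have "(\<integral>\<^sup>+v. ennreal (v * gd a c (v * s) * gd b c v) \<partial>lborel)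
      = ennreal K * (\<integral>\<^sup>+v. ennreal (v powr (a + b - 1) * exp (- ((c * (1 + s)) * v))) * indicator {0..} v \<partial>lborel)"
    unfolding e1 by (rule nn_integral_cmult) auto
  also have "(\<integral>\<^sup>+v. ennreal (v powr (a + b - 1) * exp (- ((c * (1 + s)) * v))) * indicator {0..} v \<partial>lborel)
      = ennreal (Gamma (a + b) / (c * (1 + s)) powr (a + b))"
    by (rule GI) (use a b c s in auto)
  also have "ennreal K * ennreal (Gamma (a + b) / (c * (1 + s)) powr (a + b)) = ennreal (bp a b s)"
  proof -
    have "(c * (1 + s)) powr (a + b) = c powr (a + b) * (1 + s) powr (a + b)"
      using c s by (simp add: powr_mult)
    moreover have "(1 + s) powr (- (a + b)) = 1 / (1 + s) powr (a + b)"
      by (rule powr_minus_divide)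
    ultimately have "K * (Gamma (a + b) / (c * (1 + s)) powr (a + b)) = bp a b s"
      using s c Ga Gb Gab unfolding K_def bp_def Beta_def by (simp add: field_simps)
    then show ?thesis using K by (metis ennreal_mult' times_divide_eq_right)
  qed
  finally show ?thesis .
qed


lemma alg: "(X::real) > 0 \<Longrightarrow> Y > 0 \<Longrightarrow> R / X * (X * Z * Y) / B * (1 / Y) = R * Z / B"
  by (simp add: field_simps)

lemma bp_subst:
  fixes a b r :: real
  assumes r: "0 < r" "r < 1"
  shows "bp a b (r / (1 - r)) * (1 / (1 - r)\<^sup>2) = beta_density a b r"
proof -
  have q: "1 - r > 0" using r by simp
  have h1: "1 + r / (1 - r) = 1 / (1 - r)" using q by (simp add: field_simps)
  have h2: "(1 / (1 - r)) powr (- (a + b)) = (1 - r) powr (a + b)"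
  proof -
    have e1: "(1 / (1 - r)) powr (- (a + b)) = 1 powr (- (a + b)) / (1 - r) powr (- (a + b))"
      by (rule powr_divide)
    have e2: "(1 - r) powr (- (a + b)) = 1 / (1 - r) powr (a + b)" by (rule powr_minus_divide)
    show ?thesis unfolding e1 e2 by simp
  qed
  have h3: "(r / (1 - r)) powr (a - 1) = r powr (a - 1) / (1 - r) powr (a - 1)"
    by (rule powr_divide)
  have h4: "(1 - r) powr (a + b) = (1 - r) powr (a - 1) * (1 - r) powr (b - 1) * (1 - r)\<^sup>2"
  proof -
    have p2: "(1 - r) powr 2 = (1 - r)\<^sup>2" using q by simp
    have "(1 - r) powr (a + b) = (1 - r) powr ((a - 1) + (b - 1) + 2)" by simp
    also have "\<dots> = (1 - r) powr (a - 1) * (1 - r) powr (b - 1) * (1 - r) powr 2"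
      by (simp only: powr_add)
    finally show ?thesis unfolding p2 .
  qed
  have X: "(1 - r) powr (a - 1) > 0" and Y: "(1 - r)\<^sup>2 > 0" using q by simp_all
  have pos: "0 < r / (1 - r)" using r q by simp
  have "bp a b (r / (1 - r)) = r powr (a - 1) / (1 - r) powr (a - 1) * ((1 - r) powr (a - 1) * (1 - r) powr (b - 1) * (1 - r)\<^sup>2) / Beta a b"
    unfolding bp_def h1 h2 h3 h4 using pos by (simp only: if_True)
  also have "\<dots> * (1 / (1 - r)\<^sup>2) = r powr (a - 1) * (1 - r) powr (b - 1) / Beta a b"
    using alg[OF X Y] .
  also have "\<dots> = beta_density a b r" using r by (simp add: beta_density_def)
  finally show ?thesis .
qed


lemma bp_meas[measurable]: "bp a b \<in> borel_measurable borel"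
  unfolding bp_def by measurable

lemma beta_meas[measurable]: "beta_density a b \<in> borel_measurable borel"
  unfolding beta_density_def by measurable

lemma L3:
  fixes U V :: "'a \<Rightarrow> real"
  assumes P: "prob_space M" and a: "a > 0" and b: "b > 0" and c: "c > 0"
    and ind: "prob_space.indep_var M borel U borel V"
    and U: "distributed M lborel U (\<lambda>x. ennreal (gd a c x))"
    and V: "distributed M lborel V (\<lambda>x. ennreal (gd b c x))"
  shows "distributed M lborel (\<lambda>\<omega>. U \<omega> / (U \<omega> + V \<omega>)) (\<lambda>x. ennreal (beta_density a b x))"
proof -
  interpret prob_space M by fact
  have Um[measurable]: "U \<in> borel_measurable M" using distributed_measurable[OF U] by simp
  have Vm[measurable]: "V \<in> borel_measurable M" using distributed_measurable[OF V] by simp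
  have J: "distributed M (lborel \<Otimes>\<^sub>M lborel) (\<lambda>x. (U x, V x))
      (\<lambda>(x, y). ennreal (gd a c x) * ennreal (gd b c y))"
  proof (rule distributed_joint_indep[OF _ _ U V])
    have "indep_var lborel (id \<circ> U) lborel (id \<circ> V)"
      by (rule indep_var_compose[OF ind]) auto
    then show "indep_var lborel U lborel V" by simp
  qed (auto intro: lborel.sigma_finite_measure_axioms)
  have key: "emeasure M ((\<lambda>\<omega>. U \<omega> / (U \<omega> + V \<omega>)) -` A \<inter> space M)
      = (\<integral>\<^sup>+r. ennreal (beta_density a b r) * indicator A r \<partial>lborel)" if A[measurable]: "A \<in> sets borel" for A
  proof -
    define Q where "Q = {p \<in> space (lborel \<Otimes>\<^sub>M lborel). fst p / (fst p + snd p) \<in> A}"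
    have Q[measurable]: "Q \<in> sets (lborel \<Otimes>\<^sub>M lborel)" unfolding Q_def by measurable
    have "emeasure M ((\<lambda>\<omega>. U \<omega> / (U \<omega> + V \<omega>)) -` A \<inter> space M)
        = emeasure M ((\<lambda>x. (U x, V x)) -` Q \<inter> space M)"
      by (auto simp: Q_def space_pair_measure intro!: arg_cong[where f="emeasure M"])
    also have "\<dots> = (\<integral>\<^sup>+p. (\<lambda>(x, y). ennreal (gd a c x) * ennreal (gd b c y)) p * indicator Q p \<partial>(lborel \<Otimes>\<^sub>M lborel))"
      by (rule distributed_emeasure[OF J Q])
    also have "\<dots> = (\<integral>\<^sup>+p. ennreal (gd a c (fst p)) * ennreal (gd b c (snd p)) * indicator A (fst p / (fst p + snd p)) \<partial>(lborel \<Otimes>\<^sub>M lborel))"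
      by (intro nn_integral_cong) (auto simp: Q_def space_pair_measure indicator_def split: prod.splits)
    also have "\<dots> = (\<integral>\<^sup>+v. \<integral>\<^sup>+u. ennreal (gd a c u) * ennreal (gd b c v) * indicator A (u / (u + v)) \<partial>lborel \<partial>lborel)"
      by (rule lborel_pair.nn_integral_snd[symmetric, where f="\<lambda>p. ennreal (gd a c (fst p)) * ennreal (gd b c (snd p)) * indicator A (fst p / (fst p + snd p))", simplified]) measurable
    also have "\<dots> = (\<integral>\<^sup>+v. \<integral>\<^sup>+s. ennreal (v * gd a c (v * s) * gd b c v) * indicator A (s / (s + 1)) \<partial>lborel \<partial>lborel)"
    proof (rule nn_integral_cong)
      fix v :: real
      show "(\<integral>\<^sup>+u. ennreal (gd a c u) * ennreal (gd b c v) * indicator A (u / (u + v)) \<partial>lborel)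
          = (\<integral>\<^sup>+s. ennreal (v * gd a c (v * s) * gd b c v) * indicator A (s / (s + 1)) \<partial>lborel)"
      proof (cases "v > 0")
        case False
        then show ?thesis by (simp add: gd_def)
      next
        case v: True
        have "(\<integral>\<^sup>+u. ennreal (gd a c u) * ennreal (gd b c v) * indicator A (u / (u + v)) \<partial>lborel)
          = ennreal \<bar>v\<bar> * (\<integral>\<^sup>+s. ennreal (gd a c (0 + v * s)) * ennreal (gd b c v) * indicator A ((0 + v * s) / ((0 + v * s) + v)) \<partial>lborel)"
          by (rule nn_integral_real_affine) (use v in auto)
        also have "\<dots> = (\<integral>\<^sup>+s. ennreal v * (ennreal (gd a c (v * s)) * ennreal (gd b c v) * indicator A (s / (s + 1))) \<partial>lborel)"
        proof -
          have "(v * s) / (v * s + v) = s / (s + 1)" for s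
            using v by (metis add.commute mult.commute mult_divide_mult_cancel_left_if mult.right_neutral distrib_left less_irrefl)
          then show ?thesis using v by (subst nn_integral_cmult) auto
        qed
        also have "\<dots> = (\<integral>\<^sup>+s. ennreal (v * gd a c (v * s) * gd b c v) * indicator A (s / (s + 1)) \<partial>lborel)"
          using v a b c by (intro nn_integral_cong) (simp add: ennreal_mult'' gd_nonneg mult.assoc)
        finally show ?thesis .
      qed
    qed
    also have "\<dots> = (\<integral>\<^sup>+s. \<integral>\<^sup>+v. ennreal (v * gd a c (v * s) * gd b c v) * indicator A (s / (s + 1)) \<partial>lborel \<partial>lborel)"
      by (rule lborel_pair.Fubini') measurable
    also have "\<dots> = (\<integral>\<^sup>+s. ennreal (bp a b s) * indicator A (s / (s + 1)) \<partial>lborel)"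
      by (intro nn_integral_cong) (simp add: nn_integral_multc bp_int[OF a b c])
    also have "\<dots> = (\<integral>\<^sup>+r. ennreal (beta_density a b r) * indicator A r \<partial>lborel)"
    proof -
      define F where "F s = ennreal (bp a b s) * indicator A (s / (s + 1))" for s
      define g where "g r = r / (1 - r)" for r :: real
      define g' where "g' r = 1 / (1 - r)\<^sup>2" for r :: real
      define bs where "bs n = 1 - 1 / (real n + 2)" for n :: nat
      have Fm[measurable]: "F \<in> borel_measurable borel" unfolding F_def by measurable
      have gm[measurable]: "g \<in> borel_measurable borel" unfolding g_def by measurable
      have g'm[measurable]: "g' \<in> borel_measurable borel" unfolding g'_def by measurable
      have bs1: "bs n < 1" "0 < bs n" for n unfolding bs_def by (auto simp: field_simps)
      have gbs: "g (bs n) = real n + 1" for n unfolding g_def bs_def by (simp add: field_simps)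
      have g0: "g 0 = 0" by (simp add: g_def)
      have U1: "(\<Union>n. {g 0..g (bs n)}) = {0..}"
      proof safe
        fix y :: real assume "0 \<le> y"
        obtain n :: nat where n: "y \<le> real n + 1"
          using \<open>0 \<le> y\<close> by (intro that[of "nat \<lceil>y\<rceil>"]) linarith
        then show "y \<in> (\<Union>n. {g 0..g (bs n)})" using \<open>0 \<le> y\<close> unfolding gbs g0 by auto
      qed (auto simp: gbs g0)
      have U2a: "r \<in> (\<Union>n. {0..bs n})" if r: "0 \<le> r" "r < 1" for r
      proof -
        obtain n :: nat where n: "1 / (1 - r) \<le> real n"
          by (intro that[of "nat \<lceil>1 / (1 - r)\<rceil>"]) linarith
        have "1 / (real n + 2) \<le> 1 - r"
        proof -
          have "1 / (real n + 2) \<le> 1 / (1 / (1 - r))"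
            using n r by (intro divide_left_mono) (auto simp: field_simps)
          then show ?thesis using r by simp
        qed
        then have "r \<in> {0..bs n}" using r unfolding bs_def by auto
        then show ?thesis by auto
      qed
      have U2: "(\<Union>n. {0..bs n}) = {0..<1}"
        using U2a bs1 by (auto intro: le_less_trans[OF _ bs1(1)])
      have "(\<integral>\<^sup>+s. ennreal (bp a b s) * indicator A (s / (s + 1)) \<partial>lborel)
          = (\<integral>\<^sup>+s. F s * indicator (\<Union>n. {g 0..g (bs n)}) s \<partial>lborel)"
        unfolding U1 by (intro nn_integral_cong) (auto simp: F_def bp_def indicator_def)
      also have "\<dots> = (\<integral>\<^sup>+r. F (g r) * ennreal (g' r) * indicator (\<Union>n. {0..bs n}) r \<partial>lborel)"
      proof (rule SUB[OF Fm gm g'm])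
        fix x n assume x: "x \<in> {0..bs n}"
        then have x1: "x < 1" using bs1[of n] by auto
        show "(g has_real_derivative g' x) (at x)"
          unfolding g_def g'_def using x1
          by (auto intro!: derivative_eq_intros simp: field_simps power2_eq_square)
        show "g' x \<ge> 0" unfolding g'_def by simp
      next
        fix n
        show "continuous_on {0..bs n} g'"
          unfolding g'_def using bs1[of n] by (intro continuous_intros) auto
        show "0 < bs n" by (rule bs1)
      next
        show "incseq bs" unfolding bs_def incseq_def by (auto simp: field_simps)
        show "incseq (\<lambda>n. g (bs n))" unfolding gbs incseq_def by auto
      qed
      also have "\<dots> = (\<integral>\<^sup>+r. ennreal (beta_density a b r) * indicator A r \<partial>lborel)"
      proof (rule nn_integral_cong)
        fix r :: real
        show "F (g r) * ennreal (g' r) * indicator (\<Union>n. {0..bs n}) r = ennreal (beta_density a b r) * indicator A r"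
        proof (cases "0 < r \<and> r < 1")
          case True
          have "g r / (g r + 1) = r" using True unfolding g_def by (simp add: field_simps)
          moreover have "ennreal (bp a b (g r)) * ennreal (g' r) = ennreal (beta_density a b r)"
            using bp_subst[of r a b] True unfolding g_def g'_def
            by (simp add: ennreal_mult''[symmetric] bp_def)
          moreover have "indicator {0..<1} r = (1::ennreal)" using True by simp
          ultimately show ?thesis unfolding U2 F_def by (metis mult.assoc mult.commute mult_1_right)
        next
          case False
          then show ?thesis unfolding U2 F_def
            by (auto simp: g_def bp_def beta_density_def indicator_def)
        qed
      qed
      finally show ?thesis .
    qed
    finally show ?thesis .
  qed
  show ?thesis
    unfolding distributed_def
  proof (intro conjI)
    show "(\<lambda>\<omega>. U \<omega> / (U \<omega> + V \<omega>)) \<in> measurable M lborel" by simp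
    show "(\<lambda>x. ennreal (beta_density a b x)) \<in> borel_measurable lborel" by simp
    show "distr M lborel (\<lambda>\<omega>. U \<omega> / (U \<omega> + V \<omega>)) = density lborel (\<lambda>x. ennreal (beta_density a b x))"
    proof (rule measure_eqI)
      fix A assume "A \<in> sets (distr M lborel (\<lambda>\<omega>. U \<omega> / (U \<omega> + V \<omega>)))"
      then have A[measurable]: "A \<in> sets borel" by simp
      show "emeasure (distr M lborel (\<lambda>\<omega>. U \<omega> / (U \<omega> + V \<omega>))) A = emeasure (density lborel (\<lambda>x. ennreal (beta_density a b x))) A"
        using key[OF A] by (subst emeasure_distr, simp, simp, subst emeasure_density, auto)
    qed simp
  qed
qed


lemma beta_mean:
  fixes a b :: real
  assumes a: "a > 0" and b: "b > 0"
  shows "(\<integral>x. beta_density a b x * x \<partial>lborel) = a / (a + b)"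
proof -
  have Bp: "Beta a b > 0" using a b by (simp add: Beta_def)
  have e: "ennreal (beta_density a b x * x) = ennreal (1 / Beta a b) * (ennreal (x powr (a + 1 - 1) * (1 - x) powr (b - 1)) * indicator {0..1} x)" for x
  proof (cases "0 < x \<and> x < 1")
    case True
    have "x powr (a + 1 - 1) = x powr (a - 1) * x"
    proof -
      have "x powr (a + 1 - 1) = x powr ((a - 1) + 1)" by simp
      also have "\<dots> = x powr (a - 1) * x powr 1" by (rule powr_add)
      finally show ?thesis using True by simp
    qed
    then show ?thesis using True Bp
      by (simp add: beta_density_def ennreal_mult''[symmetric] field_simps)
  next
    case False
    then show ?thesis by (auto simp: beta_density_def indicator_def)
  qed
  have "(\<integral>x. beta_density a b x * x \<partial>lborel) = enn2real (\<integral>\<^sup>+x. ennreal (beta_density a b x * x) \<partial>lborel)"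
    using Bp by (intro integral_eq_nn_integral) (auto simp: beta_density_def)
  also have "(\<integral>\<^sup>+x. ennreal (beta_density a b x * x) \<partial>lborel)
      = ennreal (1 / Beta a b) * (\<integral>\<^sup>+x. ennreal (x powr (a + 1 - 1) * (1 - x) powr (b - 1)) * indicator {0..1} x \<partial>lborel)"
    unfolding e by (rule nn_integral_cmult) auto
  also have "(\<integral>\<^sup>+x. ennreal (x powr (a + 1 - 1) * (1 - x) powr (b - 1)) * indicator {0..1} x \<partial>lborel) = ennreal (Beta (a + 1) b)"
    by (rule nn_integral_has_integral_lebesgue'[OF _ has_integral_Beta_real]) (use a b in auto)
  also have "enn2real (ennreal (1 / Beta a b) * ennreal (Beta (a + 1) b)) = Beta (a + 1) b / Beta a b"
    using Bp a b by (simp add: ennreal_mult[symmetric] Beta_def mult_ac)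
  also have "\<dots> = a / (a + b)"
  proof -
    have na: "a \<notin> \<int>\<^sub>\<le>\<^sub>0" and nab: "a + b \<notin> \<int>\<^sub>\<le>\<^sub>0" using a b by (auto dest: nonpos_Ints_nonpos)
    have "Gamma (a + 1) = a * Gamma a" by (rule Gamma_plus1[OF na])
    moreover have "Gamma (a + 1 + b) = (a + b) * Gamma (a + b)"
      using Gamma_plus1[OF nab] by (simp add: ac_simps)
    moreover have G: "Gamma a > 0" "Gamma b > 0" "Gamma (a + b) > 0" using a b by auto
    ultimately have "Beta (a + 1) b / Beta a b = (a * Gamma a) * Gamma (a + b) / (((a + b) * Gamma (a + b)) * Gamma a)"
      unfolding Beta_def by (simp add: divide_simps)
    also have "\<dots> = a / (a + b)"
    proof -
      have "Gamma a \<noteq> 0" "Gamma (a + b) \<noteq> 0" using G by auto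
      then show ?thesis using a b by (simp add: divide_simps)
    qed
    finally show ?thesis .
  qed
  finally show ?thesis .
qed


lemma beta_nonneg: "a > 0 \<Longrightarrow> b > 0 \<Longrightarrow> 0 \<le> beta_density a b x"
proof -
  assume a: "a > 0" and b: "b > 0"
  have "Beta a b > 0" using a b by (simp add: Beta_def)
  then show ?thesis by (simp add: beta_density_def)
qed

theorem mainTheorem1:
  fixes M :: "'a measure" and w :: "nat \<Rightarrow> nat \<Rightarrow> 'a \<Rightarrow> real"
    and d n :: nat and \<sigma> :: real and k i :: nat
  assumes "prob_space M"
    and "d \<ge> 2" and "n \<ge> 1" and "\<sigma> > 0"
    and "\<And>k i. k < d \<Longrightarrow> i < n \<Longrightarrow>
           distributed M lborel (w k i) (\<lambda>x. ennreal (normal_density 0 \<sigma> x))"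
    and "prob_space.indep_vars M (\<lambda>_. borel) (\<lambda>p. w (fst p) (snd p)) ({..<d} \<times> {..<n})"
    and "k < d" and "i < n"
  shows "distributed M lborel
           (\<lambda>\<omega>. (w k i \<omega>)\<^sup>2 / (\<Sum>m<d. (w m i \<omega>)\<^sup>2))
           (\<lambda>x. ennreal (beta_density (1/2) ((real d - 1) / 2) x))
       \<and> (\<integral>\<omega>. (w k i \<omega>)\<^sup>2 / (\<Sum>m<d. (w m i \<omega>)\<^sup>2) \<partial>M) = 1 / real d
       \<and> (let T = (\<lambda>j \<omega>. \<Sum>l<n. \<bar>\<Sum>m<d. w m j \<omega> * w m l \<omega>\<bar>);
              Wbar = (\<lambda>m j \<omega>. w m j \<omega> / sqrt (T j \<omega>))
          in (\<integral>\<omega>. (Wbar k i \<omega>)\<^sup>2 \<partial>M) \<le> 1 / real d)"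
proof -
  note P = assms(1) and d2 = assms(2) and s = assms(4) and N0 = assms(5) and ind = assms(6)
    and k = assms(7) and i = assms(8)
  interpret prob_space M by fact
  define I where "I = {..<d} \<times> {..<n}"
  define X where "X p = w (fst p) (snd p)" for p
  define c where "c = 1 / (2 * \<sigma>\<^sup>2)"
  have c: "c > 0" using s by (simp add: c_def)
  have indX: "indep_vars (\<lambda>_. borel) X I" using ind unfolding X_def I_def by simp
  have NX: "distributed M lborel (X p) (\<lambda>x. ennreal (normal_density 0 \<sigma> x))" if "p \<in> I" for p
    using N0[of "fst p" "snd p"] that unfolding X_def I_def by auto
  have wm[measurable]: "w m j \<in> borel_measurable M" if "m < d" "j < n" for m j
    using distributed_measurable[OF N0[OF that]] by simp
  define K where "K = {..<d} - {k}"
  define J where "J = (\<lambda>m. (m, i)) ` K"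
  have injK: "inj_on (\<lambda>m. (m, i)) K" by (auto simp: inj_on_def)
  have cardK: "card K = d - 1" using k by (simp add: K_def)
  have cardJ: "card J = d - 1" unfolding J_def using card_image[OF injK] cardK by simp
  have Jfin: "finite J" and Jne: "J \<noteq> {}" and JI: "J \<subseteq> I"
  proof -
    show "finite J" unfolding J_def K_def by simp
    have "card J \<noteq> 0" using cardJ d2 by simp
    then show "J \<noteq> {}" by auto
    show "J \<subseteq> I" unfolding J_def K_def I_def using i by auto
  qed
  define U where "U \<omega> = (w k i \<omega>)\<^sup>2" for \<omega>
  define V where "V \<omega> = (\<Sum>p\<in>J. (X p \<omega>)\<^sup>2)" for \<omega>
  have Udist: "distributed M lborel U (\<lambda>x. ennreal (gd (1/2) c x))"
    unfolding U_def c_def by (rule L1[OF P s N0[OF k i]])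
  have Vdist: "distributed M lborel V (\<lambda>x. ennreal (gd ((real d - 1) / 2) c x))"
  proof -
    have "distributed M lborel V (\<lambda>x. ennreal (gd (real (card J) / 2) c x))"
      unfolding V_def c_def by (rule LS[OF P s indX NX Jfin Jne JI])
    moreover have "real (card J) = real d - 1" using cardJ d2 by simp
    ultimately show ?thesis by simp
  qed
  have kiI: "(k, i) \<in> I" using k i by (simp add: I_def)
  have indUV: "indep_var borel U borel V"
  proof -
    have r: "indep_var (PiM {(k, i)} (\<lambda>_. borel)) (\<lambda>\<omega>. restrict (\<lambda>p. X p \<omega>) {(k, i)}) (PiM J (\<lambda>_. borel)) (\<lambda>\<omega>. restrict (\<lambda>p. X p \<omega>) J)"
      by (rule indep_var_restrict[OF indX]) (use kiI JI in \<open>auto simp: J_def K_def\<close>)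
    have m1: "(\<lambda>f. (f (k, i))\<^sup>2) \<in> borel_measurable (PiM {(k, i)} (\<lambda>_. borel :: real measure))"
      by (intro borel_measurable_power measurable_component_singleton) simp
    have m2: "(\<lambda>f. \<Sum>l\<in>J. (f l)\<^sup>2) \<in> borel_measurable (PiM J (\<lambda>_. borel :: real measure))"
      by (intro borel_measurable_sum borel_measurable_power measurable_component_singleton) simp
    have "indep_var borel ((\<lambda>f. (f (k, i))\<^sup>2) \<circ> (\<lambda>\<omega>. restrict (\<lambda>p. X p \<omega>) {(k, i)})) borel ((\<lambda>f. \<Sum>l\<in>J. (f l)\<^sup>2) \<circ> (\<lambda>\<omega>. restrict (\<lambda>p. X p \<omega>) J))"
      by (rule indep_var_compose[OF r m1 m2])
    also have "((\<lambda>f. (f (k, i))\<^sup>2) \<circ> (\<lambda>\<omega>. restrict (\<lambda>p. X p \<omega>) {(k, i)})) = U"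
      by (auto simp: fun_eq_iff U_def X_def)
    also have "((\<lambda>f. \<Sum>l\<in>J. (f l)\<^sup>2) \<circ> (\<lambda>\<omega>. restrict (\<lambda>p. X p \<omega>) J)) = V"
      by (auto simp: fun_eq_iff V_def intro!: sum.cong)
    finally show ?thesis .
  qed
  have Rdist0: "distributed M lborel (\<lambda>\<omega>. U \<omega> / (U \<omega> + V \<omega>)) (\<lambda>x. ennreal (beta_density (1/2) ((real d - 1) / 2) x))"
    by (rule L3[OF P _ _ c indUV Udist Vdist]) (use d2 in auto)
  have sumeq: "(\<Sum>m<d. (w m i \<omega>)\<^sup>2) = U \<omega> + V \<omega>" for \<omega>
  proof -
    have "(\<Sum>m<d. (w m i \<omega>)\<^sup>2) = (w k i \<omega>)\<^sup>2 + (\<Sum>m\<in>K. (w m i \<omega>)\<^sup>2)"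
      unfolding K_def using k by (subst sum.remove[of _ k]) auto
    also have "(\<Sum>m\<in>K. (w m i \<omega>)\<^sup>2) = V \<omega>"
      unfolding V_def J_def by (subst sum.reindex[OF injK]) (simp add: X_def)
    finally show ?thesis by (simp add: U_def)
  qed
  have Req: "(\<lambda>\<omega>. (w k i \<omega>)\<^sup>2 / (\<Sum>m<d. (w m i \<omega>)\<^sup>2)) = (\<lambda>\<omega>. U \<omega> / (U \<omega> + V \<omega>))"
    by (simp add: sumeq U_def)
  have Rdist: "distributed M lborel (\<lambda>\<omega>. (w k i \<omega>)\<^sup>2 / (\<Sum>m<d. (w m i \<omega>)\<^sup>2)) (\<lambda>x. ennreal (beta_density (1/2) ((real d - 1) / 2) x))"
    unfolding Req by (rule Rdist0)
  have ER: "(\<integral>\<omega>. (w k i \<omega>)\<^sup>2 / (\<Sum>m<d. (w m i \<omega>)\<^sup>2) \<partial>M) = 1 / real d"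
  proof -
    have "(\<integral>x. beta_density (1/2) ((real d - 1) / 2) x * x \<partial>lborel) = (\<integral>\<omega>. (w k i \<omega>)\<^sup>2 / (\<Sum>m<d. (w m i \<omega>)\<^sup>2) \<partial>M)"
      by (rule distributed_integral[OF Rdist, of "\<lambda>x. x", simplified]) (use d2 in \<open>auto intro!: beta_nonneg\<close>)
    moreover have "(\<integral>x. beta_density (1/2) ((real d - 1) / 2) x * x \<partial>lborel) = (1/2) / (1/2 + (real d - 1) / 2)"
      by (rule beta_mean) (use d2 in auto)
    moreover have "(1/2) / (1/2 + (real d - 1) / 2) = 1 / real d" using d2 by (simp add: field_simps)
    ultimately show ?thesis by simp
  qed
  define S where "S \<omega> = (\<Sum>m<d. (w m i \<omega>)\<^sup>2)" for \<omega>
  define T where "T j \<omega> = (\<Sum>l<n. \<bar>\<Sum>m<d. w m j \<omega> * w m l \<omega>\<bar>)" for j \<omega>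
  have wS: "(w k i \<omega>)\<^sup>2 \<le> S \<omega>" for \<omega>
    unfolding S_def using k by (intro member_le_sum) auto
  have ST: "S \<omega> \<le> T i \<omega>" for \<omega>
  proof -
    have "S \<omega> = \<bar>\<Sum>m<d. w m i \<omega> * w m i \<omega>\<bar>"
      unfolding S_def by (simp add: power2_eq_square sum_nonneg)
    also have "\<dots> \<le> T i \<omega>" unfolding T_def using i
      by (intro member_le_sum[of i "{..<n}" "\<lambda>l. \<bar>\<Sum>m<d. w m i \<omega> * w m l \<omega>\<bar>"]) auto
    finally show ?thesis .
  qed
  have bound: "(w k i \<omega> / sqrt (T i \<omega>))\<^sup>2 \<le> (w k i \<omega>)\<^sup>2 / S \<omega>" for \<omega>
  proof -
    have T0: "T i \<omega> \<ge> 0" unfolding T_def by (intro sum_nonneg) auto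
    have "(w k i \<omega> / sqrt (T i \<omega>))\<^sup>2 = (w k i \<omega>)\<^sup>2 / T i \<omega>"
      using T0 by (simp add: power_divide)
    also have "\<dots> \<le> (w k i \<omega>)\<^sup>2 / S \<omega>"
    proof (cases "S \<omega> = 0")
      case True
      then have "w k i \<omega> = 0" using wS[of \<omega>] by simp
      then show ?thesis by simp
    next
      case False
      have "S \<omega> \<ge> 0" unfolding S_def by (intro sum_nonneg) auto
      then have "S \<omega> > 0" using False by linarith
      then show ?thesis using ST[of \<omega>] by (intro divide_left_mono) auto
    qed
    finally show ?thesis .
  qed
  have S0: "S \<omega> \<ge> 0" for \<omega> unfolding S_def by (intro sum_nonneg) auto
  have Rle1: "(w k i \<omega>)\<^sup>2 / S \<omega> \<le> 1" for \<omega>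
    using wS[of \<omega>] S0[of \<omega>] by (cases "S \<omega> = 0") (auto simp: divide_le_eq_1)
  have Rnn: "0 \<le> (w k i \<omega>)\<^sup>2 / S \<omega>" for \<omega>
    unfolding S_def by (intro divide_nonneg_nonneg sum_nonneg) auto
  have Rm: "(\<lambda>\<omega>. (w k i \<omega>)\<^sup>2 / S \<omega>) \<in> borel_measurable M"
    using distributed_measurable[OF Rdist] unfolding S_def by simp
  have Rint: "integrable M (\<lambda>\<omega>. (w k i \<omega>)\<^sup>2 / S \<omega>)"
    by (rule integrable_const_bound[where B=1]) (use Rm Rle1 Rnn S0 in auto)
  have part3: "(\<integral>\<omega>. (w k i \<omega> / sqrt (T i \<omega>))\<^sup>2 \<partial>M) \<le> 1 / real d"
  proof -
    have "(\<integral>\<omega>. (w k i \<omega> / sqrt (T i \<omega>))\<^sup>2 \<partial>M) \<le> (\<integral>\<omega>. (w k i \<omega>)\<^sup>2 / S \<omega> \<partial>M)"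
      by (rule integral_mono'[OF Rint bound Rnn])
    also have "\<dots> = 1 / real d" using ER unfolding S_def .
    finally show ?thesis .
  qed
  show ?thesis
    using Rdist ER part3 unfolding T_def Let_def by simp
qed

end
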